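(* Let $G$ be a connected graph of girth $s$ and let $k\ge 2$. Suppose $G$ has $k$ level-disjoint partitions $\mathcal{S}^1,\dots,\mathcal{S}^k$ rooted in a vertex $v$ of optimal height, i.e. $\max_i h(\mathcal{S}^i)=\mathrm{ecc}(v)+k-1$ if $G$ is non-bipartite and $\max_i h(\mathcal{S}^i)=\mathrm{ecc}(v)+2k-2$ if $G$ is bipartite. Then $\mathrm{ecc}(v)\ge s-2$ if $G$ is non-bipartite, and $\mathrm{ecc}(v)\ge s-3$ if $G$ is bipartite.
   Context: For $S\subseteq V(G)$, $N(S)$ is the set of vertices adjacent to some vertex of $S$. A level partition of $G$ is a tuple $\mathcal{S}=(S_0,\dots,S_h)$ of pairwise disjoint sets with union $V(G)$ such that $S_i\subseteq N(S_{i-1})$ for $1\le i\le h$; $h(\mathcal{S})=h$ is its height; it is rooted in $v$ if $S_0=\{v\}$. Level partitions are level-disjoint if for every two of them $\mathcal{S},\mathcal{T}$, $S_i\cap T_i=\emptyset$ for every $1\le i\le\min(h(\mathcal{S}),h(\mathcal{T}))$. The girth is the length of a shortest cycle; $\mathrm{ecc}(v)=\max_{u} d(u,v)$. *)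

theory Defs
  imports Main
begin

definition simple_graph :: "'a set \<Rightarrow> ('a \<Rightarrow> 'a \<Rightarrow> bool) \<Rightarrow> bool" where
  "simple_graph V E \<longleftrightarrow> finite V \<and> V \<noteq> {} \<and>
     (\<forall>x y. E x y \<longrightarrow> x \<in> V \<and> y \<in> V) \<and>
     (\<forall>x y. E x y \<longrightarrow> E y x) \<and> (\<forall>x. \<not> E x x)"

definition is_walk :: "'a set \<Rightarrow> ('a \<Rightarrow> 'a \<Rightarrow> bool) \<Rightarrow> 'a list \<Rightarrow> bool" where
  "is_walk V E p \<longleftrightarrow> p \<noteq> [] \<and> set p \<subseteq> V \<and>
     (\<forall>i. Suc i < length p \<longrightarrow> E (p ! i) (p ! Suc i))"

definition connected_graph :: "'a set \<Rightarrow> ('a \<Rightarrow> 'a \<Rightarrow> bool) \<Rightarrow> bool" where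
  "connected_graph V E \<longleftrightarrow>
     (\<forall>u\<in>V. \<forall>w\<in>V. \<exists>p. is_walk V E p \<and> hd p = u \<and> last p = w)"

definition dist :: "'a set \<Rightarrow> ('a \<Rightarrow> 'a \<Rightarrow> bool) \<Rightarrow> 'a \<Rightarrow> 'a \<Rightarrow> nat" where
  "dist V E u w = (LEAST n. \<exists>p. is_walk V E p \<and> hd p = u \<and> last p = w \<and> length p = Suc n)"

definition ecc :: "'a set \<Rightarrow> ('a \<Rightarrow> 'a \<Rightarrow> bool) \<Rightarrow> 'a \<Rightarrow> nat" where
  "ecc V E v = Max ((\<lambda>u. dist V E u v) ` V)"

definition bipartite :: "'a set \<Rightarrow> ('a \<Rightarrow> 'a \<Rightarrow> bool) \<Rightarrow> bool" where
  "bipartite V E \<longleftrightarrow> (\<exists>A\<subseteq>V. \<forall>x y. E x y \<longrightarrow> (x \<in> A \<longleftrightarrow> y \<notin> A))"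

definition is_cycle :: "'a set \<Rightarrow> ('a \<Rightarrow> 'a \<Rightarrow> bool) \<Rightarrow> 'a list \<Rightarrow> bool" where
  "is_cycle V E c \<longleftrightarrow> length c \<ge> 3 \<and> distinct c \<and> is_walk V E c \<and> E (last c) (hd c)"

definition has_girth :: "'a set \<Rightarrow> ('a \<Rightarrow> 'a \<Rightarrow> bool) \<Rightarrow> nat \<Rightarrow> bool" where
  "has_girth V E s \<longleftrightarrow> (\<exists>c. is_cycle V E c \<and> length c = s) \<and>
     (\<forall>c. is_cycle V E c \<longrightarrow> s \<le> length c)"

definition nbhd :: "('a \<Rightarrow> 'a \<Rightarrow> bool) \<Rightarrow> 'a set \<Rightarrow> 'a set" where
  "nbhd E S = {u. \<exists>w\<in>S. E w u}"

text \<open>A level partition (S_0,...,S_h) is represented by the list [S_0,...,S_h].\<close>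
definition level_partition :: "'a set \<Rightarrow> ('a \<Rightarrow> 'a \<Rightarrow> bool) \<Rightarrow> 'a set list \<Rightarrow> bool" where
  "level_partition V E S \<longleftrightarrow> S \<noteq> [] \<and>
     (\<forall>i j. i < j \<and> j < length S \<longrightarrow> S ! i \<inter> S ! j = {}) \<and>
     \<Union> (set S) = V \<and>
     (\<forall>i. 1 \<le> i \<and> i < length S \<longrightarrow> S ! i \<subseteq> nbhd E (S ! (i - 1)))"

definition height :: "'a set list \<Rightarrow> nat" where
  "height S = length S - 1"

definition rooted_in :: "'a set list \<Rightarrow> 'a \<Rightarrow> bool" where
  "rooted_in S v \<longleftrightarrow> S \<noteq> [] \<and> S ! 0 = {v}"

definition level_disjoint :: "'a set list \<Rightarrow> 'a set list \<Rightarrow> bool" where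
  "level_disjoint S T \<longleftrightarrow>
     (\<forall>i. 1 \<le> i \<and> i \<le> min (height S) (height T) \<longrightarrow> S ! i \<inter> T ! i = {})"

end

theory Submission imports Defs begin

lemma lp_path:
  assumes lp: "level_partition V E S" and r: "rooted_in S v"
  shows "i < length S \<Longrightarrow> x \<in> S!i \<Longrightarrow> \<exists>f. f 0 = v \<and> f i = x \<and> (\<forall>j\<le>i. f j \<in> S!j) \<and> (\<forall>j<i. E (f j) (f (Suc j)))"
proof (induction i arbitrary: x)
  case 0
  then have "x = v" using r by (simp add: rooted_in_def)
  then show ?case using r by (intro exI[of _ "\<lambda>_. v"]) (auto simp: rooted_in_def)
next
  case (Suc i)
  have "S!(Suc i) \<subseteq> nbhd E (S!i)" using lp Suc.prems(1) unfolding level_partition_def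
    by (metis diff_Suc_1 le_add1 plus_1_eq_Suc)
  then obtain w where w: "w \<in> S!i" "E w x" using Suc.prems(2) unfolding nbhd_def by blast
  obtain f where f: "f 0 = v" "f i = w" "\<forall>j\<le>i. f j \<in> S!j" "\<forall>j<i. E (f j) (f (Suc j))"
    using Suc.IH[OF _ w(1)] Suc.prems(1) by auto
  show ?case
  proof (intro exI[of _ "f(Suc i := x)"] conjI allI impI)
    show "(f(Suc i := x)) 0 = v" using f by simp
    show "(f(Suc i := x)) (Suc i) = x" by simp
    fix j assume "j \<le> Suc i" then show "(f(Suc i := x)) j \<in> S!j"
      using f(3) Suc.prems(2) by (cases "j = Suc i") auto
  next
    fix j assume "j < Suc i" then show "E ((f(Suc i := x)) j) ((f(Suc i := x)) (Suc j))"
      using f w by (cases "j = i") auto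
  qed
qed

lemma lp_inj:
  assumes lp: "level_partition V E S" and "i < length S" and "\<forall>j\<le>i. f j \<in> S!j"
  shows "inj_on f {0..i}"
proof (rule inj_onI)
  fix a b assume ab: "a \<in> {0..i}" "b \<in> {0..i}" "f a = f b"
  show "a = b"
  proof (rule ccontr)
    assume "a \<noteq> b"
    then have "a < b \<or> b < a" by auto
    then show False
    proof
      assume "a < b"
      then have "S!a \<inter> S!b = {}" using lp ab assms(2) unfolding level_partition_def by auto
      moreover have "f a \<in> S!a" "f b \<in> S!b" using ab assms(3) by auto
      ultimately show False using ab by auto
    next
      assume "b < a"
      then have "S!b \<inter> S!a = {}" using lp ab assms(2) unfolding level_partition_def by auto
      moreover have "f a \<in> S!a" "f b \<in> S!b" using ab assms(3) by auto
      ultimately show False using ab by auto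
    qed
  qed
qed

lemma lp_cycle:
  assumes g: "simple_graph V E" and gi: "has_girth V E s"
    and lp: "level_partition V E S" and r: "rooted_in S v"
    and i: "i < length S" "2 \<le> i" and u: "u \<in> S!i" "E v u"
  shows "s \<le> Suc i"
proof -
  obtain f where f: "f 0 = v" "f i = u" "\<forall>j\<le>i. f j \<in> S!j" "\<forall>j<i. E (f j) (f (Suc j))"
    using lp_path[OF lp r i(1) u(1)] by blast
  define c where "c = map f [0..<Suc i]"
  have inj: "inj_on f {0..i}" using lp_inj[OF lp i(1) f(3)] .
  have "is_cycle V E c"
    unfolding is_cycle_def is_walk_def
  proof (intro conjI allI impI)
    show "3 \<le> length c" using i c_def by simp
    show "distinct c" unfolding c_def using inj by (simp add: distinct_map atLeastLessThanSuc_atLeastAtMost del: upt_Suc)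
    show "c \<noteq> []" using c_def by simp
    show "set c \<subseteq> V"
    proof
      fix y assume "y \<in> set c"
      then obtain j where j: "j \<le> i" "y = f j" unfolding c_def by (auto simp del: upt_Suc simp: less_Suc_eq_le)
      then have "y \<in> S!j" using f by auto
      moreover have "j < length S" using j i by auto
      ultimately show "y \<in> V" using lp unfolding level_partition_def by auto
    qed
  next
    fix j assume "Suc j < length c"
    then show "E (c!j) (c!Suc j)" using f(4) unfolding c_def
      by (simp add: nth_map_upt del: upt_Suc)
  next
    have "last c = u" unfolding c_def using f by (simp del: upt_Suc add: last_map)
    moreover have "hd c = v" unfolding c_def using f by (simp del: upt_Suc add: hd_map)
    ultimately show "E (last c) (hd c)" using g u unfolding simple_graph_def by auto
  qed
  then have "s \<le> length c" using gi unfolding has_girth_def by blast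
  then show ?thesis using c_def by simp
qed

lemma bip_parity:
  assumes A: "\<forall>x y. E x y \<longrightarrow> (x \<in> A \<longleftrightarrow> y \<notin> A)" and f: "\<forall>j<i. E (f j) (f (Suc j))"
  shows "j \<le> i \<Longrightarrow> (f j \<in> A \<longleftrightarrow> (f 0 \<in> A \<longleftrightarrow> even j))"
proof (induction j)
  case 0 then show ?case by simp
next
  case (Suc j)
  then have "E (f j) (f (Suc j))" using f by auto
  then show ?case using Suc A by auto
qed

lemma max_lin:
  assumes "finite (A::nat set)" "\<forall>x\<in>A. m \<le> x" "A \<noteq> {}"
  shows "m + card A - 1 \<le> Max A"
proof -
  have "A \<subseteq> {m..Max A}" using assms by auto
  then have "card A \<le> card {m..Max A}" by (rule card_mono[rotated]) simp
  moreover have "m \<le> Max A" using assms Max_in by blast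
  moreover have "card A > 0" using assms by auto
  ultimately show ?thesis by simp
qed

lemma max_odd:
  assumes "finite (A::nat set)" "\<forall>x\<in>A. odd x \<and> m \<le> x" "A \<noteq> {}" "odd m"
  shows "m + 2 * card A - 2 \<le> Max A"
proof -
  have inj: "inj_on (\<lambda>x. x div 2) A"
    by (rule inj_onI) (metis assms(2) odd_two_times_div_two_succ)
  have "(\<lambda>x. x div 2) ` A \<subseteq> {m div 2..Max A div 2}" using assms by (auto intro!: div_le_mono Max_ge)
  then have "card ((\<lambda>x. x div 2) ` A) \<le> card {m div 2..Max A div 2}" by (rule card_mono[rotated]) simp
  then have "card A \<le> Max A div 2 + 1 - m div 2" using card_image[OF inj] by simp
  moreover have "odd (Max A)" using assms Max_in by blast
  moreover have "m \<le> Max A" using assms Max_in by blast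
  moreover obtain a where "Max A = 2*a+1" using \<open>odd (Max A)\<close> oddE by blast
  moreover obtain b where "m = 2*b+1" using assms(4) oddE by blast
  ultimately show ?thesis by simp
qed
theorem proposition7:
  fixes V :: "'a set" and E :: "'a \<Rightarrow> 'a \<Rightarrow> bool"
    and P :: "nat \<Rightarrow> 'a set list" and v :: 'a and s k :: nat
  assumes "simple_graph V E" and "connected_graph V E" and "has_girth V E s"
    and "k \<ge> 2" and "v \<in> V"
    and "\<forall>i\<in>{1..k}. level_partition V E (P i) \<and> rooted_in (P i) v"
    and "\<forall>i\<in>{1..k}. \<forall>j\<in>{1..k}. i \<noteq> j \<longrightarrow> level_disjoint (P i) (P j)"
    and "\<not> bipartite V E \<longrightarrow> Max ((\<lambda>i. height (P i)) ` {1..k}) = ecc V E v + k - 1"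
    and "bipartite V E \<longrightarrow> Max ((\<lambda>i. height (P i)) ` {1..k}) = ecc V E v + 2 * k - 2"
  shows "(\<not> bipartite V E \<longrightarrow> ecc V E v \<ge> s - 2) \<and>
         (bipartite V E \<longrightarrow> ecc V E v \<ge> s - 3)"
proof -
  note g = assms(1)
  have lp: "\<And>a. a \<in> {1..k} \<Longrightarrow> level_partition V E (P a)" and rt: "\<And>a. a \<in> {1..k} \<Longrightarrow> rooted_in (P a) v"
    using assms(6) by auto
  have k1: "1 \<in> {1..k}" using assms(4) by simp
  obtain c where c: "is_cycle V E c" "length c = s" using assms(3) unfolding has_girth_def by blast
  have s3: "s \<ge> 3" using c unfolding is_cycle_def by simp
  obtain x where x: "x \<in> V" "x \<noteq> v"
  proof -
    have "card (set c) \<ge> 3" using c unfolding is_cycle_def by (simp add: distinct_card)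
    have "\<not> set c \<subseteq> {v}"
    proof
      assume "set c \<subseteq> {v}"
      then have "card (set c) \<le> card {v}" by (intro card_mono) auto
      then show False using \<open>card (set c) \<ge> 3\<close> by simp
    qed
    then show ?thesis using that c unfolding is_cycle_def is_walk_def by blast
  qed
  have mem: "\<exists>i. i < length (P a) \<and> y \<in> P a ! i" if "a \<in> {1..k}" "y \<in> V" for a y
  proof -
    have "y \<in> \<Union>(set (P a))" using lp[OF that(1)] that(2) unfolding level_partition_def by blast
    then obtain T where "T \<in> set (P a)" "y \<in> T" by blast
    then show ?thesis by (metis in_set_conv_nth)
  qed
  obtain ix where ix: "ix < length (P 1)" "x \<in> P 1 ! ix"
    using mem[OF k1 x(1)] by blast
  have r1: "P 1 ! 0 = {v}" using rt[OF k1] unfolding rooted_in_def by blast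
  have "ix \<noteq> 0"
  proof
    assume "ix = 0"
    then have "x \<in> P 1 ! 0" using ix by simp
    then show False using r1 x(2) by blast
  qed
  obtain f where f: "f 0 = v" "f ix = x" "\<forall>j\<le>ix. f j \<in> P 1!j" "\<forall>j<ix. E (f j) (f (Suc j))"
    using lp_path[OF lp[OF k1] rt[OF k1] ix] by blast
  define u where "u = f 1"
  have vu: "E v u" using f \<open>ix \<noteq> 0\<close> u_def by (metis One_nat_def neq0_conv)
  have uV: "u \<in> V" and uv: "u \<noteq> v" using vu g unfolding simple_graph_def by metis+
  define lev where "lev a = (SOME i. i < length (P a) \<and> u \<in> P a ! i)" for a
  have lev: "lev a < length (P a) \<and> u \<in> P a ! lev a" if "a \<in> {1..k}" for a
  proof -
    have "\<exists>i. i < length (P a) \<and> u \<in> P a ! i"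
      using mem[OF that uV] .
    then show ?thesis unfolding lev_def by (rule someI_ex)
  qed
  have lev0: "lev a \<noteq> 0" if "a \<in> {1..k}" for a
  proof
    assume "lev a = 0"
    then have "u \<in> P a ! 0" using lev[OF that] by simp
    moreover have "P a ! 0 = {v}" using rt[OF that] unfolding rooted_in_def by blast
    ultimately show False using uv by blast
  qed
  have inj: "inj_on lev {1..k}"
  proof (rule inj_onI, rule ccontr)
    fix a b assume ab: "a \<in> {1..k}" "b \<in> {1..k}" "lev a = lev b" "a \<noteq> b"
    then have "level_disjoint (P a) (P b)" using assms(7) by blast
    moreover have "1 \<le> lev a" "lev a \<le> min (height (P a)) (height (P b))"
      using lev[OF ab(1)] lev[OF ab(2)] lev0[OF ab(1)] ab(3) by (auto simp: height_def)
    ultimately have "P a ! lev a \<inter> P b ! lev a = {}" unfolding level_disjoint_def by blast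
    then show False using lev[OF ab(1)] lev[OF ab(2)] ab(3) by auto
  qed
  have levs: "lev a = 1 \<or> s - 1 \<le> lev a" if "a \<in> {1..k}" for a
  proof (cases "lev a \<ge> 2")
    case True
    have "s \<le> Suc (lev a)" using lp_cycle[OF g assms(3) lp[OF that] rt[OF that] _ True _ vu] lev[OF that] by blast
    then show ?thesis by arith
  next
    case False then show ?thesis using lev0[OF that] by simp
  qed
  define L where "L = lev ` {1..k} - {1}"
  have cardL: "card L \<ge> k - 1"
  proof -
    have "card (lev ` {1..k}) = k" using card_image[OF inj] by simp
    moreover have "lev ` {1..k} \<subseteq> insert 1 L" unfolding L_def by auto
    then have "card (lev ` {1..k}) \<le> card (insert 1 L)" by (rule card_mono[rotated]) (simp add: L_def)
    moreover have "card (insert 1 L) \<le> Suc (card L)"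
      by (metis card_insert_if finite_Diff finite_atLeastAtMost finite_imageI L_def le_SucI order_refl)
    ultimately show ?thesis by simp
  qed
  have finL: "finite L" unfolding L_def by simp
  have Lne: "L \<noteq> {}" using cardL assms(4) by (cases "L = {}") auto
  have Lge: "\<forall>y\<in>L. s - 1 \<le> y"
  proof
    fix y assume "y \<in> L"
    then obtain a where "a \<in> {1..k}" "y = lev a" "y \<noteq> 1" unfolding L_def by blast
    then show "s - 1 \<le> y" using levs by blast
  qed
  obtain a where a: "a \<in> {1..k}" "Max L = lev a" using Max_in[OF finL Lne] unfolding L_def by auto
  have "lev a \<le> height (P a)" using conjunct1[OF lev[OF a(1)]] unfolding height_def by linarith
  also have "\<dots> \<le> Max ((\<lambda>i. height (P i)) ` {1..k})" using a(1) by (intro Max_ge) auto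
  finally have MH: "Max L \<le> Max ((\<lambda>i. height (P i)) ` {1..k})" using a by simp
  show ?thesis
  proof (intro conjI impI)
    assume nb: "\<not> bipartite V E"
    have "s - 1 + card L - 1 \<le> Max L" using max_lin[OF finL Lge Lne] .
    then show "ecc V E v \<ge> s - 2" using MH assms(8) nb cardL assms(4) s3 by linarith
  next
    assume b: "bipartite V E"
    then obtain A where A: "\<forall>x y. E x y \<longrightarrow> (x \<in> A \<longleftrightarrow> y \<notin> A)" unfolding bipartite_def by blast
    have oddlev: "odd (lev a)" if ain: "a \<in> {1..k}" for a
    proof -
      obtain h where h: "h 0 = v" "h (lev a) = u" "\<forall>j<lev a. E (h j) (h (Suc j))"
        using lp_path[OF lp[OF ain] rt[OF ain]] lev[OF ain] by blast
      have "h (lev a) \<in> A \<longleftrightarrow> (h 0 \<in> A \<longleftrightarrow> even (lev a))" using bip_parity[OF A h(3)] by blast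
      then show ?thesis using h A vu by blast
    qed
    define m where "m = (if odd (s - 1) then s - 1 else s)"
    have Lodd: "\<forall>y\<in>L. odd y \<and> m \<le> y"
    proof
      fix y assume y: "y \<in> L"
      then have "s - 1 \<le> y" using Lge by blast
      moreover obtain a where "a \<in> {1..k}" "y = lev a" using y unfolding L_def by blast
      then have "odd y" using oddlev by blast
      ultimately have "odd y" "s - 1 \<le> y" by auto
      then show "odd y \<and> m \<le> y" unfolding m_def using s3 by presburger
    qed
    have "odd m" unfolding m_def using s3 by presburger
    have "m + 2 * card L - 2 \<le> Max L" using max_odd[OF finL Lodd Lne \<open>odd m\<close>] .
    moreover have "m \<ge> s - 1" unfolding m_def by auto
    ultimately show "ecc V E v \<ge> s - 3" using MH assms(9) b cardL assms(4) s3 by linarith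
  qed
qed
end
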